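(* Let $n\ge 2$, $N=\{1,\dots,n\}$, for each $i\in N$ let $A_i$ be a nonempty finite set, $A=\prod_{i\in N}A_i$, $u_i:A\to\mathbb{R}$, $u(a)=(u_i(a))_{i\in N}$, and fix $\lambda\in\mathbb{R}^n\setminus\{\mathbf 0\}$. Then: (1) For $\Delta=\delta^T$ sufficiently close to $1$, the solution of the problem $\max_{a^{[n]}\in A^n}W_\lambda(a^{[n]},\Delta)$ is to play, in each overlap $k=1,\dots,n$, some $a^k\in\arg\max_{a'\in A}\lambda\cdot u(a')$. Moreover, $F(\delta,T)\to V$ as $\delta^T\nearrow 1$. (2) For $\Delta=\delta^T$ sufficiently close to $0$, the solution of the problem $\max_{a^{[n]}\in A^n}W_\lambda(a^{[n]},\Delta)$ is to play, in each overlap $k=1,\dots,n$, some $a^k\in\arg\max_{a'\in A}\lambda_{k}u_{k}(a')$ (player $k$ being the youngest player in overlap $k$). Moreover, $F(\delta,T)\to\prod_{i\in N}\left[\min_{a\in A}u_i(a),\ \max_{a\in A}u_i(a)\right]$ as $\delta^T\searrow 0$.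
   Context: Here $\delta\in(0,1]$ and $T\in\mathbb{N}$. For $a^{[n]}=(a^1,\dots,a^n)\in A^n$ extend indices by $a^s=a^{s-n}$ for $s\ge n+1$, and for $\Delta\in(0,1]$ define $$v_i^\Delta(a^{[n]})=\frac{\sum_{k=1}^n\Delta^{k-1}u_i(a^{i+k-1})}{\sum_{k=1}^n\Delta^{k-1}},\qquad W_\lambda(a^{[n]},\Delta)=\sum_{i=1}^n\lambda_i v_i^\Delta(a^{[n]}).$$ "The solution is to play ..." means that every maximizer $(a^1,\dots,a^n)$ has the stated form. $V=\operatorname{co}\{u(a):a\in A\}$ ($\operatorname{co}$ = convex hull). For $a^{[nT]}=(a^1,\dots,a^{nT})\in A^{nT}$, extend indices by $a^s=a^{s-nT}$ for $s\ge nT+1$, set $U_i(a^{[nT]})=\frac{1}{\sum_{k=1}^{nT}\delta^{k-1}}\sum_{k=1}^{nT}\delta^{k-1}u_i(a^{(i-1)T+k})$, $U=(U_i)_{i\in N}$, and $F(\delta,T)=\operatorname{co}\left(\bigcup_{a^{[nT]}\in A^{nT}}\{U(a^{[nT]})\}\right)$. Convergence of sets is with respect to the Hausdorff distance. *)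

theory Defs
  imports "HOL-Analysis.Analysis"
begin

text \<open>A sequence of m profiles a^1..a^m is a function
  in PiE {1..m} (\<lambda>_. A); it is extended periodically: a^s = a^(s-m).\<close>

definition cyc :: "nat \<Rightarrow> nat \<Rightarrow> nat" where
  "cyc m s = (s - 1) mod m + 1"

definition profiles :: "nat \<Rightarrow> (nat \<Rightarrow> 'b set) \<Rightarrow> (nat \<Rightarrow> 'b) set" where
  "profiles n Aset = PiE {1..n} Aset"

definition seqs :: "nat \<Rightarrow> nat \<Rightarrow> (nat \<Rightarrow> 'b set) \<Rightarrow> (nat \<Rightarrow> (nat \<Rightarrow> 'b)) set" where
  "seqs n m Aset = PiE {1..m} (\<lambda>_. profiles n Aset)"

definition vval :: "nat \<Rightarrow> (nat \<Rightarrow> (nat \<Rightarrow> 'b) \<Rightarrow> real) \<Rightarrow> nat \<Rightarrow> (nat \<Rightarrow> (nat \<Rightarrow> 'b)) \<Rightarrow> real \<Rightarrow> real" where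
  "vval n u i a \<Delta> =
     (\<Sum>k=1..n. \<Delta> ^ (k - 1) * u i (a (cyc n (i + k - 1)))) / (\<Sum>k=1..n. \<Delta> ^ (k - 1))"

definition Wval :: "nat \<Rightarrow> (nat \<Rightarrow> (nat \<Rightarrow> 'b) \<Rightarrow> real) \<Rightarrow> (nat \<Rightarrow> real) \<Rightarrow> (nat \<Rightarrow> (nat \<Rightarrow> 'b)) \<Rightarrow> real \<Rightarrow> real" where
  "Wval n u lam a \<Delta> = (\<Sum>i=1..n. lam i * vval n u i a \<Delta>)"

definition Uval :: "nat \<Rightarrow> nat \<Rightarrow> real \<Rightarrow> (nat \<Rightarrow> (nat \<Rightarrow> 'b) \<Rightarrow> real) \<Rightarrow> nat \<Rightarrow> (nat \<Rightarrow> (nat \<Rightarrow> 'b)) \<Rightarrow> real" where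
  "Uval n T \<delta> u i a =
     (\<Sum>k=1..n*T. \<delta> ^ (k - 1) * u i (a (cyc (n*T) ((i - 1) * T + k)))) / (\<Sum>k=1..n*T. \<delta> ^ (k - 1))"

text \<open>Identification of a nat-indexed payoff vector (players 1..n) with a point of
  R^n = real^'n, via a fixed labelling pl : {1..n} -> 'n (a bijection).\<close>
definition vec_of :: "(nat \<Rightarrow> 'n) \<Rightarrow> nat \<Rightarrow> (nat \<Rightarrow> real) \<Rightarrow> real ^ 'n" where
  "vec_of pl n x = (\<chi> j. x (the_inv_into {1..n} pl j))"

definition Fset :: "(nat \<Rightarrow> 'n) \<Rightarrow> nat \<Rightarrow> (nat \<Rightarrow> 'b set) \<Rightarrow> (nat \<Rightarrow> (nat \<Rightarrow> 'b) \<Rightarrow> real)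
    \<Rightarrow> real \<Rightarrow> nat \<Rightarrow> (real ^ 'n) set" where
  "Fset pl n Aset u \<delta> T =
     convex hull ((\<lambda>a. vec_of pl n (\<lambda>i. Uval n T \<delta> u i a)) ` seqs n (n*T) Aset)"

definition Vset :: "(nat \<Rightarrow> 'n) \<Rightarrow> nat \<Rightarrow> (nat \<Rightarrow> 'b set) \<Rightarrow> (nat \<Rightarrow> (nat \<Rightarrow> 'b) \<Rightarrow> real) \<Rightarrow> (real ^ 'n) set" where
  "Vset pl n Aset u = convex hull ((\<lambda>a. vec_of pl n (\<lambda>i. u i a)) ` profiles n Aset)"

definition Boxset :: "(nat \<Rightarrow> 'n) \<Rightarrow> nat \<Rightarrow> (nat \<Rightarrow> 'b set) \<Rightarrow> (nat \<Rightarrow> (nat \<Rightarrow> 'b) \<Rightarrow> real) \<Rightarrow> (real ^ 'n) set" where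
  "Boxset pl n Aset u =
     cbox (vec_of pl n (\<lambda>i. Min (u i ` profiles n Aset))) (vec_of pl n (\<lambda>i. Max (u i ` profiles n Aset)))"

text \<open>"The solution of max W is to play, in each overlap k, a profile in S k":
  every maximizer a^[n] has a^k in S k for all k.\<close>
definition solution_is :: "nat \<Rightarrow> (nat \<Rightarrow> 'b set) \<Rightarrow> (nat \<Rightarrow> (nat \<Rightarrow> 'b) \<Rightarrow> real) \<Rightarrow> (nat \<Rightarrow> real)
    \<Rightarrow> real \<Rightarrow> (nat \<Rightarrow> (nat \<Rightarrow> 'b) set) \<Rightarrow> bool" where
  "solution_is n Aset u lam \<Delta> S \<longleftrightarrow>
     (\<forall>a\<in>seqs n n Aset. (\<forall>b\<in>seqs n n Aset. Wval n u lam b \<Delta> \<le> Wval n u lam a \<Delta>)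
        \<longrightarrow> (\<forall>k\<in>{1..n}. a k \<in> S k))"

definition hausdorff_dist :: "'a::metric_space set \<Rightarrow> 'a set \<Rightarrow> real" where
  "hausdorff_dist S T =
     (if S \<noteq> {} \<and> T \<noteq> {} \<and> bounded S \<and> bounded T
      then max (SUP x\<in>S. infdist x T) (SUP y\<in>T. infdist y S) else 0)"

definition argmax_on :: "'a set \<Rightarrow> ('a \<Rightarrow> real) \<Rightarrow> 'a set" where
  "argmax_on X f = {x\<in>X. \<forall>y\<in>X. f y \<le> f x}"

end

theory Submission
  imports Defs
begin

lemma cyc_range: "0 < m \<Longrightarrow> cyc m s \<in> {1..m}"
  unfolding cyc_def by (simp add: Suc_leI)

lemma cyc_small: "1 \<le> x \<Longrightarrow> x \<le> 2*n \<Longrightarrow> cyc n x = (if x \<le> n then x else x - n)"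
proof -
  assume a: "1 \<le> x" "x \<le> 2*n"
  show ?thesis
  proof (cases "x \<le> n")
    case True then show ?thesis using a unfolding cyc_def by simp
  next
    case False
    have e: "x - 1 = (x - 1 - n) + n" using False by simp
    have l: "x - 1 - n < n" using a False by simp
    have "(x - 1) mod n = ((x - 1 - n) + n) mod n" using e by simp
    also have "\<dots> = (x - 1 - n) mod n" by (rule mod_add_self2)
    also have "\<dots> = x - 1 - n" using l by (rule mod_less)
    finally have "(x - 1) mod n = x - 1 - n" .
    then show ?thesis using a False unfolding cyc_def by simp
  qed
qed

lemma cyc_id: "1 \<le> x \<Longrightarrow> x \<le> m \<Longrightarrow> cyc m x = x"
  unfolding cyc_def by simp

lemma cyc_period: "1 \<le> x \<Longrightarrow> cyc m (x + m) = cyc m x"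
proof -
  assume "1 \<le> x"
  then have "x + m - 1 = (x - 1) + m" by simp
  then show ?thesis unfolding cyc_def by simp
qed

lemma sum_cyc_shift:
  assumes "0 < m"
  shows "(\<Sum>k=1..m. f (cyc m (c + k))) = (\<Sum>s=1..m. (f s :: real))"
proof (induction c)
  case 0
  then show ?case by (intro sum.cong) (auto simp: cyc_id)
next
  case (Suc c)
  define h where "h k = f (cyc m (c + k))" for k
  have e1: "(\<Sum>k=1..m. f (cyc m (Suc c + k))) = (\<Sum>k=1..m. h (Suc k))"
    unfolding h_def by simp
  have e2: "(\<Sum>k=1..m. h (Suc k)) = (\<Sum>k=Suc 1..Suc m. h k)"
    by (rule sum.shift_bounds_cl_Suc_ivl[symmetric])
  have e3: "(\<Sum>k=1..Suc m. h k) = h 1 + (\<Sum>k=Suc 1..Suc m. h k)"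
    by (rule sum.atLeast_Suc_atMost) simp
  have e4: "(\<Sum>k=1..Suc m. h k) = (\<Sum>k=1..m. h k) + h (Suc m)"
    by simp
  have e5: "h (Suc m) = h 1"
    unfolding h_def using cyc_period[of "c+1" m] by simp
  have "(\<Sum>k=1..m. h k) = (\<Sum>s=1..m. f s)" using Suc unfolding h_def by simp
  then show ?case using e1 e2 e3 e4 e5 by simp
qed


lemma avg_bounds:
  fixes w x :: "nat \<Rightarrow> real"
  assumes "finite K" "\<forall>k\<in>K. 0 \<le> w k" "0 < sum w K" "\<forall>k\<in>K. lo \<le> x k \<and> x k \<le> hi"
  shows "lo \<le> (\<Sum>k\<in>K. w k * x k) / sum w K \<and> (\<Sum>k\<in>K. w k * x k) / sum w K \<le> hi"
proof
  have "lo * sum w K = (\<Sum>k\<in>K. w k * lo)" by (simp add: sum_distrib_left mult.commute)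
  also have "\<dots> \<le> (\<Sum>k\<in>K. w k * x k)" using assms by (intro sum_mono mult_left_mono) auto
  finally show "lo \<le> (\<Sum>k\<in>K. w k * x k) / sum w K" using assms(3) by (simp add: pos_le_divide_eq)
  have "(\<Sum>k\<in>K. w k * x k) \<le> (\<Sum>k\<in>K. w k * hi)" using assms by (intro sum_mono mult_left_mono) auto
  also have "\<dots> = hi * sum w K" by (simp add: sum_distrib_left mult.commute)
  finally show "(\<Sum>k\<in>K. w k * x k) / sum w K \<le> hi" using assms(3) by (simp add: pos_divide_le_eq)
qed

lemma avg_close:
  fixes w x :: "nat \<Rightarrow> real"
  assumes "finite K" "\<forall>k\<in>K. 0 \<le> w k" "0 < sum w K"
  shows "\<bar>(\<Sum>k\<in>K. w k * x k) / sum w K - c\<bar> \<le> (\<Sum>k\<in>K. w k * \<bar>x k - c\<bar>) / sum w K"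
proof -
  have "(\<Sum>k\<in>K. w k * x k) / sum w K - c = (\<Sum>k\<in>K. w k * (x k - c)) / sum w K"
    using assms(3) by (simp add: field_simps sum_subtractf sum_distrib_left sum_distrib_right mult.commute)
  also have "\<bar>\<dots>\<bar> = \<bar>\<Sum>k\<in>K. w k * (x k - c)\<bar> / sum w K" using assms(3) by simp
  also have "\<dots> \<le> (\<Sum>k\<in>K. \<bar>w k * (x k - c)\<bar>) / sum w K"
    using assms(3) by (intro divide_right_mono sum_abs) auto
  also have "\<dots> = (\<Sum>k\<in>K. w k * \<bar>x k - c\<bar>) / sum w K"
    using assms(2) by (intro arg_cong[where f="\<lambda>t. t / sum w K"] sum.cong) (auto simp: abs_mult)
  finally show ?thesis .
qed

lemma vec_of_norm:
  assumes pl: "bij_betw pl {1..n} (UNIV :: 'n::finite set)"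
  shows "norm (vec_of pl n x - vec_of pl n y) \<le> (\<Sum>i=1..n. \<bar>x i - y i\<bar>)"
proof -
  have "norm (vec_of pl n x - vec_of pl n y) \<le> (\<Sum>j\<in>UNIV. \<bar>(vec_of pl n x - vec_of pl n y) $ j\<bar>)"
    by (rule norm_le_l1_cart)
  also have "\<dots> = (\<Sum>j\<in>UNIV. \<bar>x (the_inv_into {1..n} pl j) - y (the_inv_into {1..n} pl j)\<bar>)"
    unfolding vec_of_def by simp
  also have "\<dots> = (\<Sum>i=1..n. \<bar>x (the_inv_into {1..n} pl (pl i)) - y (the_inv_into {1..n} pl (pl i))\<bar>)"
    using sum.reindex_bij_betw[OF pl, of "\<lambda>j. \<bar>x (the_inv_into {1..n} pl j) - y (the_inv_into {1..n} pl j)\<bar>"]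
    by simp
  also have "\<dots> = (\<Sum>i=1..n. \<bar>x i - y i\<bar>)"
    using pl by (intro sum.cong refl) (simp add: bij_betw_def the_inv_into_f_f)
  finally show ?thesis .
qed

lemma hd_lemma:
  fixes S T :: "'a::real_normed_vector set"
  assumes "S \<noteq> {}" "T \<noteq> {}" "bounded S" "bounded T"
    and "\<forall>x\<in>S. \<exists>y\<in>T. dist x y \<le> r" "\<forall>y\<in>T. \<exists>x\<in>S. dist y x \<le> r" "r < e"
  shows "hausdorff_dist S T < e"
proof -
  have "(SUP x\<in>S. infdist x T) \<le> r"
  proof (rule cSUP_least)
    fix x assume "x \<in> S"
    then obtain y where "y \<in> T" "dist x y \<le> r" using assms(5) by blast
    then show "infdist x T \<le> r" using infdist_le[of y T x] by linarith
  qed (use assms in auto)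
  moreover have "(SUP y\<in>T. infdist y S) \<le> r"
  proof (rule cSUP_least)
    fix y assume "y \<in> T"
    then obtain x where "x \<in> S" "dist y x \<le> r" using assms(6) by blast
    then show "infdist y S \<le> r" using infdist_le[of x S y] by linarith
  qed (use assms in auto)
  ultimately show ?thesis using assms unfolding hausdorff_dist_def by simp
qed

lemma hull_close:
  fixes T :: "'a::real_normed_vector set"
  assumes "convex T" "0 \<le> r" "\<forall>g\<in>G. \<exists>t\<in>T. dist g t \<le> r"
  shows "\<forall>x\<in>convex hull G. \<exists>t\<in>T. dist x t \<le> r"
proof -
  let ?M = "(\<Union>x\<in>T. \<Union>y\<in>cball 0 r. {x + y})"
  have cM: "convex ?M" by (rule convex_sums) (use assms in auto)
  have "G \<subseteq> ?M"
  proof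
    fix g assume "g \<in> G"
    then obtain t where t: "t \<in> T" "dist g t \<le> r" using assms by blast
    then have "g - t \<in> cball 0 r" by (simp add: dist_norm norm_minus_commute)
    then show "g \<in> ?M" using t by force
  qed
  then have "convex hull G \<subseteq> ?M" using cM by (rule hull_minimal)
  then show ?thesis by (force simp: dist_norm)
qed

lemma box_hull:
  fixes L H :: "real ^ 'n"
  assumes LH: "\<forall>j. L$j \<le> H$j"
  shows "cbox L H \<subseteq> convex hull {x. \<forall>j. x$j = L$j \<or> x$j = H$j}"
proof -
  let ?C = "{x. \<forall>j. x$j = L$j \<or> x$j = H$j}"
  have main: "\<forall>y\<in>cbox L H. (\<forall>j. j \<notin> J \<longrightarrow> y$j = L$j \<or> y$j = H$j) \<longrightarrow> y \<in> convex hull ?C"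
    if "finite J" for J :: "'n set"
    using that
  proof (induction J rule: finite_induct)
    case empty
    then show ?case by (auto intro: hull_inc)
  next
    case (insert j J)
    show ?case
    proof (intro ballI impI)
      fix y assume y: "y \<in> cbox L H" and fr: "\<forall>i. i \<notin> insert j J \<longrightarrow> y$i = L$i \<or> y$i = H$i"
      define y1 where "y1 = (\<chi> k. if k = j then H$j else y$k)"
      define y0 where "y0 = (\<chi> k. if k = j then L$j else y$k)"
      have yb: "\<forall>i. L$i \<le> y$i \<and> y$i \<le> H$i" using y by (simp add: mem_box_cart)
      have y1h: "y1 \<in> convex hull ?C"
        using insert.IH yb fr LH unfolding y1_def by (auto simp: mem_box_cart)
      have y0h: "y0 \<in> convex hull ?C"
        using insert.IH yb fr LH unfolding y0_def by (auto simp: mem_box_cart)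
      show "y \<in> convex hull ?C"
      proof (cases "L$j = H$j")
        case True
        then have "y = y0" using yb unfolding y0_def
          by (simp add: vec_eq_iff) (metis order_antisym)
        then show ?thesis using y0h by simp
      next
        case False
        then have pos: "H$j - L$j > 0" using LH by (metis diff_gt_0_iff_gt order_le_less)
        define t where "t = (y$j - L$j) / (H$j - L$j)"
        have t0: "0 \<le> t" using yb pos unfolding t_def by simp
        have t1: "t \<le> 1" using yb pos unfolding t_def by simp
        have "y = t *\<^sub>R y1 + (1 - t) *\<^sub>R y0"
        proof (subst vec_eq_iff, intro allI)
          fix i
          show "y$i = (t *\<^sub>R y1 + (1 - t) *\<^sub>R y0) $ i"
          proof (cases "i = j")
            case True
            have "t * H$j + (1 - t) * L$j = L$j + t * (H$j - L$j)" by (simp add: algebra_simps)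
            also have "\<dots> = y$j" using pos unfolding t_def by simp
            finally show ?thesis using True unfolding y1_def y0_def by simp
          next
            case False
            then show ?thesis unfolding y1_def y0_def by (simp add: algebra_simps)
          qed
        qed
        moreover have "t *\<^sub>R y1 + (1 - t) *\<^sub>R y0 \<in> convex hull ?C"
          using convexD[OF convex_convex_hull y1h y0h, of t "1 - t"] t0 t1 by simp
        ultimately show ?thesis by simp
      qed
    qed
  qed
  show ?thesis using main[of UNIV] by auto
qed

definition Jx :: "nat \<Rightarrow> nat \<Rightarrow> nat \<Rightarrow> nat" where
  "Jx n i k = (if i \<le> k then k - i + 1 else n + k - i + 1)"

lemma Jx_range: "i \<in> {1..n} \<Longrightarrow> k \<in> {1..n} \<Longrightarrow> Jx n i k \<in> {1..n}"
  unfolding Jx_def by auto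

lemma cyc_eq_iff: "i \<in> {1..n} \<Longrightarrow> j \<in> {1..n} \<Longrightarrow> k \<in> {1..n} \<Longrightarrow>
   cyc n (i + j - 1) = k \<longleftrightarrow> j = Jx n i k"
proof -
  assume a: "i \<in> {1..n}" "j \<in> {1..n}" "k \<in> {1..n}"
  have "cyc n (i + j - 1) = (if i + j - 1 \<le> n then i + j - 1 else i + j - 1 - n)"
    by (rule cyc_small) (use a in auto)
  then show ?thesis using a unfolding Jx_def by (auto split: if_splits)
qed

lemma W_diff:
  fixes u :: "nat \<Rightarrow> (nat \<Rightarrow> 'b) \<Rightarrow> real"
  assumes k: "k \<in> {1..n}" and D: "0 < D"
  shows "Wval n u lam (a(k := p)) D - Wval n u lam a D =
     (\<Sum>i=1..n. lam i * D ^ (Jx n i k - 1) * (u i p - u i (a k))) / (\<Sum>j=1..n. D ^ (j - 1))"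
proof -
  let ?S = "(\<Sum>j=1..n. D ^ (j - 1))"
  have vd: "vval n u i (a(k := p)) D - vval n u i a D = D ^ (Jx n i k - 1) * (u i p - u i (a k)) / ?S"
    if i: "i \<in> {1..n}" for i
  proof -
    have "vval n u i (a(k := p)) D - vval n u i a D =
      (\<Sum>j=1..n. D ^ (j - 1) * (u i ((a(k := p)) (cyc n (i + j - 1))) - u i (a (cyc n (i + j - 1))))) / ?S"
      unfolding vval_def by (simp add: diff_divide_distrib sum_subtractf right_diff_distrib)
    also have "(\<Sum>j=1..n. D ^ (j - 1) * (u i ((a(k := p)) (cyc n (i + j - 1))) - u i (a (cyc n (i + j - 1)))))
        = (\<Sum>j=1..n. if j = Jx n i k then D ^ (Jx n i k - 1) * (u i p - u i (a k)) else 0)"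
    proof (intro sum.cong refl)
      fix j assume j: "j \<in> {1..n}"
      show "D ^ (j - 1) * (u i ((a(k := p)) (cyc n (i + j - 1))) - u i (a (cyc n (i + j - 1))))
        = (if j = Jx n i k then D ^ (Jx n i k - 1) * (u i p - u i (a k)) else 0)"
      proof (cases "j = Jx n i k")
        case True
        then have "cyc n (i + j - 1) = k" using cyc_eq_iff[OF i j k] by simp
        then show ?thesis using True by simp
      next
        case False
        then have "cyc n (i + j - 1) \<noteq> k" using cyc_eq_iff[OF i j k] by simp
        then show ?thesis using False by simp
      qed
    qed
    also have "\<dots> = D ^ (Jx n i k - 1) * (u i p - u i (a k))"
      using Jx_range[OF i k] by (simp add: sum.delta)
    finally show ?thesis .
  qed
  have "Wval n u lam (a(k := p)) D - Wval n u lam a D = (\<Sum>i=1..n. lam i * (vval n u i (a(k := p)) D - vval n u i a D))"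
    unfolding Wval_def by (simp add: sum_subtractf right_diff_distrib)
  also have "\<dots> = (\<Sum>i=1..n. lam i * D ^ (Jx n i k - 1) * (u i p - u i (a k)) / ?S)"
    using vd by (intro sum.cong refl) auto
  also have "\<dots> = (\<Sum>i=1..n. lam i * D ^ (Jx n i k - 1) * (u i p - u i (a k))) / ?S"
    by (simp add: sum_divide_distrib)
  finally show ?thesis .
qed


lemma gap_lemma:
  fixes phi :: "nat \<Rightarrow> 'a \<Rightarrow> real"
  assumes "finite K" "finite P"
  shows "\<exists>g>0. \<forall>k\<in>K. \<forall>p\<in>argmax_on P (phi k). \<forall>q\<in>P. q \<notin> argmax_on P (phi k) \<longrightarrow> phi k q + g \<le> phi k p"
proof -
  define X where "X = {(k,p,q). k \<in> K \<and> p \<in> argmax_on P (phi k) \<and> q \<in> P \<and> q \<notin> argmax_on P (phi k)}"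
  define G where "G = (\<lambda>(k,p,q). phi k p - phi k q) ` X"
  have "X \<subseteq> K \<times> P \<times> P" unfolding X_def argmax_on_def by auto
  then have fX: "finite X" using assms by (meson finite_SigmaI finite_subset)
  then have fG: "finite G" unfolding G_def by simp
  have Gpos: "\<forall>x\<in>G. 0 < x"
  proof
    fix x assume "x \<in> G"
    then obtain k p q where kpq: "(k,p,q) \<in> X" "x = phi k p - phi k q" unfolding G_def by auto
    then obtain y where "y \<in> P" "phi k y > phi k q" unfolding X_def argmax_on_def by auto
    moreover have "phi k y \<le> phi k p" using kpq `y \<in> P` unfolding X_def argmax_on_def by auto
    ultimately show "0 < x" using kpq by simp
  qed
  define g where "g = (if G = {} then 1 else Min G)"
  have gpos: "g > 0" unfolding g_def using fG Gpos by auto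
  show ?thesis
  proof (intro exI[of _ g] conjI gpos ballI impI)
    fix k p q assume h: "k \<in> K" "p \<in> argmax_on P (phi k)" "q \<in> P" "q \<notin> argmax_on P (phi k)"
    then have "phi k p - phi k q \<in> G" unfolding G_def X_def by force
    then have "g \<le> phi k p - phi k q" unfolding g_def using fG by auto
    then show "phi k q + g \<le> phi k p" by simp
  qed
qed

lemma argmax_ne:
  fixes phi :: "'a \<Rightarrow> real"
  assumes "finite P" "P \<noteq> {}"
  shows "\<exists>p. p \<in> argmax_on P phi"
proof -
  have "Max (phi ` P) \<in> phi ` P" using assms by (intro Max_in) auto
  then obtain p where "p \<in> P" "phi p = Max (phi ` P)" by auto
  then show ?thesis unfolding argmax_on_def using assms by (intro exI[of _ p]) auto
qed

lemma profiles_fin: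
  assumes fin: "\<forall>i\<in>{1..n}. finite (Aset i) \<and> Aset i \<noteq> {}"
  shows "finite (profiles n Aset)" "profiles n Aset \<noteq> {}"
  unfolding profiles_def using fin by (auto intro!: finite_PiE simp: PiE_eq_empty_iff)

lemma seqs_fin:
  assumes fin: "\<forall>i\<in>{1..n}. finite (Aset i) \<and> Aset i \<noteq> {}"
  shows "finite (seqs n m Aset)" "seqs n m Aset \<noteq> {}"
  unfolding seqs_def using profiles_fin[OF fin] by (auto intro!: finite_PiE simp: PiE_eq_empty_iff)

definition Rng :: "nat \<Rightarrow> (nat \<Rightarrow> 'b set) \<Rightarrow> (nat \<Rightarrow> (nat \<Rightarrow> 'b) \<Rightarrow> real) \<Rightarrow> nat \<Rightarrow> real" where
  "Rng n Aset u i = Max (u i ` profiles n Aset) - Min (u i ` profiles n Aset)"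

lemma u_bounds:
  assumes fin: "\<forall>i\<in>{1..n}. finite (Aset i) \<and> Aset i \<noteq> {}" and q: "q \<in> profiles n Aset"
  shows "Min (u i ` profiles n Aset) \<le> u i q \<and> u i q \<le> Max (u i ` profiles n Aset)"
  using profiles_fin[OF fin] q by auto

lemma u_rng:
  assumes fin: "\<forall>i\<in>{1..n}. finite (Aset i) \<and> Aset i \<noteq> {}" and "p \<in> profiles n Aset" "q \<in> profiles n Aset"
  shows "\<bar>u i p - u i q\<bar> \<le> Rng n Aset u i" "0 \<le> Rng n Aset u i"
  using u_bounds[OF fin assms(2), of u i] u_bounds[OF fin assms(3), of u i] unfolding Rng_def by auto

lemma sol_improve:
  assumes "\<And>a k. a \<in> seqs n n Aset \<Longrightarrow> k \<in> {1..n} \<Longrightarrow> a k \<notin> S k \<Longrightarrow>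
      \<exists>b\<in>seqs n n Aset. Wval n u lam b D > Wval n u lam a D"
  shows "solution_is n Aset u lam D S"
  unfolding solution_is_def using assms by (meson not_le)

lemma upd_seqs: "a \<in> seqs n m Aset \<Longrightarrow> k \<in> {1..m} \<Longrightarrow> p \<in> profiles n Aset \<Longrightarrow> a(k := p) \<in> seqs n m Aset"
  unfolding seqs_def by (auto simp: PiE_def extensional_def)

lemma seqs_mem: "a \<in> seqs n m Aset \<Longrightarrow> k \<in> {1..m} \<Longrightarrow> a k \<in> profiles n Aset"
  unfolding seqs_def by auto

lemma S_pos: "0 < (D::real) \<Longrightarrow> 1 \<le> n \<Longrightarrow> 0 < (\<Sum>j=1..n. D ^ (j - 1 :: nat))"
  by (rule sum_pos) auto

lemma part1:
  fixes u :: "nat \<Rightarrow> (nat \<Rightarrow> 'b) \<Rightarrow> real"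
  assumes n2: "n \<ge> 2"
    and fin: "\<forall>i\<in>{1..n}. finite (Aset i) \<and> Aset i \<noteq> {}"
  shows "\<exists>\<epsilon>>0. \<forall>(D::real). 0 < D \<and> D \<le> 1 \<and> 1 - \<epsilon> < D \<longrightarrow>
        solution_is n Aset u lam D
          (\<lambda>k. argmax_on (profiles n Aset) (\<lambda>a'. \<Sum>i=1..n. lam i * u i a'))"
proof -
  let ?P = "profiles n Aset"
  define Lm where "Lm q = (\<Sum>i=1..n. lam i * u i q)" for q
  obtain g where g: "g > 0" "\<forall>k\<in>{0::nat}. \<forall>p\<in>argmax_on ?P ((\<lambda>_. Lm) k). \<forall>q\<in>?P.
      q \<notin> argmax_on ?P ((\<lambda>_. Lm) k) \<longrightarrow> Lm q + g \<le> Lm p"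
    using gap_lemma[of "{0::nat}" ?P "\<lambda>_. Lm"] profiles_fin[OF fin] by blast
  define B where "B = (\<Sum>i=1..n. \<bar>lam i\<bar> * Rng n Aset u i)"
  obtain q0 where q0: "q0 \<in> ?P" using profiles_fin[OF fin] by auto
  have B0: "0 \<le> B" unfolding B_def using u_rng[OF fin q0 q0] by (intro sum_nonneg) auto
  define e where "e = g / (n * B + 1)"
  have nB: "0 < real n * B + 1" using B0 by (simp add: add_nonneg_pos)
  have e0: "e > 0" unfolding e_def using g nB by (intro divide_pos_pos) auto
  have neB: "n * e * B < g"
  proof -
    have "n * e * B = g * (n * B / (n * B + 1))" unfolding e_def using B0 by (simp add: field_simps)
    also have "\<dots> < g * 1" using g nB by (intro mult_strict_left_mono) (auto simp: divide_less_eq)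
    finally show ?thesis by simp
  qed
  show ?thesis
  proof (intro exI[of _ e] conjI e0 allI impI)
    fix D :: real assume D: "0 < D \<and> D \<le> 1 \<and> 1 - e < D"
    show "solution_is n Aset u lam D (\<lambda>k. argmax_on ?P (\<lambda>a'. \<Sum>i=1..n. lam i * u i a'))"
    proof (rule sol_improve)
      fix a k assume a: "a \<in> seqs n n Aset" and k: "k \<in> {1..n}"
        and nk: "a k \<notin> argmax_on ?P (\<lambda>a'. \<Sum>i=1..n. lam i * u i a')"
      obtain p where p: "p \<in> argmax_on ?P Lm" using argmax_ne[of ?P Lm] profiles_fin[OF fin] by auto
      have pP: "p \<in> ?P" using p unfolding argmax_on_def by auto
      have akP: "a k \<in> ?P" using seqs_mem[OF a k] .
      have gap: "Lm (a k) + g \<le> Lm p" using g(2) p akP nk unfolding Lm_def by auto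
      define Cn where "Cn = 1 - D ^ n"
      have Cn: "Cn \<le> n * (1 - D)"
        using Bernoulli_inequality[of "D - 1" n] D unfolding Cn_def by (simp add: algebra_simps)
      have tm: "lam i * D ^ (Jx n i k - 1) * (u i p - u i (a k)) \<ge>
            lam i * (u i p - u i (a k)) - Cn * (\<bar>lam i\<bar> * Rng n Aset u i)" if i: "i \<in> {1..n}" for i
      proof -
        define c where "c = 1 - D ^ (Jx n i k - 1)"
        define x where "x = lam i * (u i p - u i (a k))"
        have c0: "0 \<le> c" unfolding c_def using D by (simp add: power_le_one)
        have "D ^ n \<le> D ^ (Jx n i k - 1)" using D Jx_range[OF i k]
          by (intro power_decreasing) auto
        then have cC: "c \<le> Cn" unfolding c_def Cn_def by simp
        have xY: "\<bar>x\<bar> \<le> \<bar>lam i\<bar> * Rng n Aset u i"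
          unfolding x_def abs_mult using u_rng[OF fin pP akP] by (intro mult_left_mono) auto
        have "c * x \<le> c * \<bar>x\<bar>" using c0 by (intro mult_left_mono) auto
        also have "\<dots> \<le> Cn * (\<bar>lam i\<bar> * Rng n Aset u i)" using c0 cC xY
          by (intro mult_mono) auto
        finally have "c * x \<le> Cn * (\<bar>lam i\<bar> * Rng n Aset u i)" .
        moreover have "lam i * D ^ (Jx n i k - 1) * (u i p - u i (a k)) = x - c * x"
          unfolding x_def c_def by (simp add: algebra_simps)
        ultimately show ?thesis unfolding x_def by simp
      qed
      have s1: "(\<Sum>i=1..n. lam i * (u i p - u i (a k)) - Cn * (\<bar>lam i\<bar> * Rng n Aset u i))
          \<le> (\<Sum>i=1..n. lam i * D ^ (Jx n i k - 1) * (u i p - u i (a k)))"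
        using tm by (intro sum_mono) auto
      have s2: "(\<Sum>i=1..n. lam i * (u i p - u i (a k)) - Cn * (\<bar>lam i\<bar> * Rng n Aset u i))
          = Lm p - Lm (a k) - Cn * B"
        unfolding Lm_def B_def by (simp add: sum_subtractf sum_distrib_left right_diff_distrib)
      have s3: "Cn * B \<le> n * e * B"
      proof -
        have "n * (1 - D) \<le> n * e" using D by (intro mult_left_mono) auto
        then have "Cn \<le> n * e" using Cn by linarith
        then show ?thesis using B0 by (intro mult_right_mono) auto
      qed
      have s4: "0 < Lm p - Lm (a k) - Cn * B" using gap neB s3 by linarith
      have Npos: "0 < (\<Sum>i=1..n. lam i * D ^ (Jx n i k - 1) * (u i p - u i (a k)))"
        using s1 s4 unfolding s2 by linarith
      have "Wval n u lam (a(k := p)) D - Wval n u lam a D > 0"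
        unfolding W_diff[OF k, of D] using D S_pos[of D n] n2 Npos by (simp add: W_diff[OF k] divide_pos_pos)
      then show "\<exists>b\<in>seqs n n Aset. Wval n u lam b D > Wval n u lam a D"
        using upd_seqs[OF a k pP] by (intro bexI[of _ "a(k := p)"]) auto
    qed
  qed
qed


lemma Jx_self: "k \<in> {1..n} \<Longrightarrow> Jx n k k = 1"
  unfolding Jx_def by simp

lemma Jx_other: "i \<in> {1..n} \<Longrightarrow> k \<in> {1..n} \<Longrightarrow> i \<noteq> k \<Longrightarrow> 2 \<le> Jx n i k"
  unfolding Jx_def by auto

lemma part3:
  fixes u :: "nat \<Rightarrow> (nat \<Rightarrow> 'b) \<Rightarrow> real"
  assumes n2: "n \<ge> 2"
    and fin: "\<forall>i\<in>{1..n}. finite (Aset i) \<and> Aset i \<noteq> {}"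
  shows "\<exists>\<epsilon>>0. \<forall>(D::real). 0 < D \<and> D \<le> 1 \<and> D < \<epsilon> \<longrightarrow>
        solution_is n Aset u lam D
          (\<lambda>k. argmax_on (profiles n Aset) (\<lambda>a'. lam k * u k a'))"
proof -
  let ?P = "profiles n Aset"
  define Lm where "Lm k q = lam k * u k q" for k q
  obtain g where g: "g > 0" "\<forall>k\<in>{1..n}. \<forall>p\<in>argmax_on ?P (Lm k). \<forall>q\<in>?P.
      q \<notin> argmax_on ?P (Lm k) \<longrightarrow> Lm k q + g \<le> Lm k p"
    using gap_lemma[of "{1..n}" ?P Lm] profiles_fin[OF fin] by blast
  define B where "B = (\<Sum>i=1..n. \<bar>lam i\<bar> * Rng n Aset u i)"
  obtain q0 where q0: "q0 \<in> ?P" using profiles_fin[OF fin] by auto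
  have B0: "0 \<le> B" unfolding B_def using u_rng[OF fin q0 q0] by (intro sum_nonneg) auto
  define e where "e = g / (B + 1)"
  have nB: "0 < B + 1" using B0 by simp
  have e0: "e > 0" unfolding e_def using g nB by (intro divide_pos_pos) auto
  have neB: "e * B < g"
  proof -
    have "e * B = g * (B / (B + 1))" unfolding e_def using B0 by (simp add: field_simps)
    also have "\<dots> < g * 1" using g nB by (intro mult_strict_left_mono) (auto simp: divide_less_eq)
    finally show ?thesis by simp
  qed
  show ?thesis
  proof (intro exI[of _ e] conjI e0 allI impI)
    fix D :: real assume D: "0 < D \<and> D \<le> 1 \<and> D < e"
    show "solution_is n Aset u lam D (\<lambda>k. argmax_on ?P (\<lambda>a'. lam k * u k a'))"
    proof (rule sol_improve)
      fix a k assume a: "a \<in> seqs n n Aset" and k: "k \<in> {1..n}"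
        and nk: "a k \<notin> argmax_on ?P (\<lambda>a'. lam k * u k a')"
      obtain p where p: "p \<in> argmax_on ?P (Lm k)" using argmax_ne[of ?P "Lm k"] profiles_fin[OF fin] by auto
      have pP: "p \<in> ?P" using p unfolding argmax_on_def by auto
      have akP: "a k \<in> ?P" using seqs_mem[OF a k] .
      have gap: "Lm k (a k) + g \<le> Lm k p" using g(2) p akP nk k unfolding Lm_def by auto
      have tm: "lam i * D ^ (Jx n i k - 1) * (u i p - u i (a k)) \<ge>
            (if i = k then lam i * (u i p - u i (a k)) else 0) - D * (\<bar>lam i\<bar> * Rng n Aset u i)" if i: "i \<in> {1..n}" for i
      proof (cases "i = k")
        case True
        have "0 \<le> D * (\<bar>lam i\<bar> * Rng n Aset u i)" using D u_rng[OF fin pP akP] by simp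
        then show ?thesis using True Jx_self[OF k] by simp
      next
        case False
        define x where "x = lam i * (u i p - u i (a k))"
        have xY: "\<bar>x\<bar> \<le> \<bar>lam i\<bar> * Rng n Aset u i"
          unfolding x_def abs_mult using u_rng[OF fin pP akP] by (intro mult_left_mono) auto
        have "D ^ (Jx n i k - 1) \<le> D ^ 1" using D Jx_other[OF i k False]
          by (intro power_decreasing) auto
        then have dd: "D ^ (Jx n i k - 1) \<le> D" by simp
        have "- (D ^ (Jx n i k - 1) * x) \<le> D ^ (Jx n i k - 1) * \<bar>x\<bar>"
        proof -
          have "0 \<le> D ^ (Jx n i k - 1)" using D by simp
          then have "D ^ (Jx n i k - 1) * (- x) \<le> D ^ (Jx n i k - 1) * \<bar>x\<bar>"
            by (intro mult_left_mono) auto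
          then show ?thesis by simp
        qed
        also have "\<dots> \<le> D * (\<bar>lam i\<bar> * Rng n Aset u i)"
          using dd xY D by (intro mult_mono) auto
        finally have bd: "- (D ^ (Jx n i k - 1) * x) \<le> D * (\<bar>lam i\<bar> * Rng n Aset u i)" .
        have eq: "lam i * D ^ (Jx n i k - 1) * (u i p - u i (a k)) = D ^ (Jx n i k - 1) * x"
          unfolding x_def by (simp add: algebra_simps)
        show ?thesis unfolding eq using False bd by simp
      qed
      have s1: "(\<Sum>i=1..n. (if i = k then lam i * (u i p - u i (a k)) else 0) - D * (\<bar>lam i\<bar> * Rng n Aset u i))
          \<le> (\<Sum>i=1..n. lam i * D ^ (Jx n i k - 1) * (u i p - u i (a k)))"
        using tm by (intro sum_mono) auto
      have s2: "(\<Sum>i=1..n. (if i = k then lam i * (u i p - u i (a k)) else 0) - D * (\<bar>lam i\<bar> * Rng n Aset u i))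
          = Lm k p - Lm k (a k) - D * B"
        using k unfolding Lm_def B_def by (simp add: sum_subtractf sum_distrib_left right_diff_distrib)
      have s3: "D * B \<le> e * B"
        using B0 D by (intro mult_right_mono) auto
      have s4: "0 < Lm k p - Lm k (a k) - D * B" using gap neB s3 by linarith
      have Npos: "0 < (\<Sum>i=1..n. lam i * D ^ (Jx n i k - 1) * (u i p - u i (a k)))"
        using s1 s4 unfolding s2 by linarith
      have "Wval n u lam (a(k := p)) D - Wval n u lam a D > 0"
        unfolding W_diff[OF k, of D] using D S_pos[of D n] n2 Npos by (simp add: W_diff[OF k] divide_pos_pos)
      then show "\<exists>b\<in>seqs n n Aset. Wval n u lam b D > Wval n u lam a D"
        using upd_seqs[OF a k pP] by (intro bexI[of _ "a(k := p)"]) auto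
    qed
  qed
qed


lemma inv_pl:
  assumes pl: "bij_betw pl {1..n} (UNIV :: 'n set)"
  shows "the_inv_into {1..n} pl j \<in> {1..n}" "pl (the_inv_into {1..n} pl j) = j"
    "i \<in> {1..n} \<Longrightarrow> the_inv_into {1..n} pl (pl i) = i"
proof -
  have inj: "inj_on pl {1..n}" and im: "pl ` {1..n} = UNIV" using pl by (auto simp: bij_betw_def)
  show "the_inv_into {1..n} pl j \<in> {1..n}" using the_inv_into_into[OF inj, of j "{1..n}"] im by auto
  show "pl (the_inv_into {1..n} pl j) = j" using f_the_inv_into_f[OF inj, of j] im by auto
  show "i \<in> {1..n} \<Longrightarrow> the_inv_into {1..n} pl (pl i) = i" using the_inv_into_f_f[OF inj] by auto
qed

lemma vec_of_nth: "vec_of pl n x $ j = x (the_inv_into {1..n} pl j)"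
  unfolding vec_of_def by simp

lemma m_pos: "1 \<le> n \<Longrightarrow> 1 \<le> T \<Longrightarrow> 1 \<le> n * (T::nat)"
  by (simp add: Suc_le_eq)

lemma U_bounds:
  assumes fin: "\<forall>i\<in>{1..n}. finite (Aset i) \<and> Aset i \<noteq> {}"
    and a: "a \<in> seqs n (n*T) Aset" and nT: "1 \<le> n" "1 \<le> T" and d: "0 < (d::real)"
  shows "Min (u i ` profiles n Aset) \<le> Uval n T d u i a \<and> Uval n T d u i a \<le> Max (u i ` profiles n Aset)"
  unfolding Uval_def
proof (rule avg_bounds)
  show "0 < (\<Sum>k=1..n*T. d ^ (k - 1))" using S_pos[OF d m_pos[OF nT]] .
  show "\<forall>k\<in>{1..n * T}. Min (u i ` profiles n Aset) \<le> u i (a (cyc (n * T) ((i - 1) * T + k))) \<and>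
        u i (a (cyc (n * T) ((i - 1) * T + k))) \<le> Max (u i ` profiles n Aset)"
  proof
    fix k assume "k \<in> {1..n * T}"
    have "a (cyc (n * T) ((i - 1) * T + k)) \<in> profiles n Aset"
      using seqs_mem[OF a cyc_range] m_pos[OF nT] by auto
    from u_bounds[OF fin this, of u i] show "Min (u i ` profiles n Aset) \<le> u i (a (cyc (n * T) ((i - 1) * T + k))) \<and>
        u i (a (cyc (n * T) ((i - 1) * T + k))) \<le> Max (u i ` profiles n Aset)" .
  qed
qed (use d in auto)

lemma U_in_F: "a \<in> seqs n (n*T) Aset \<Longrightarrow> vec_of pl n (\<lambda>i. Uval n T d u i a) \<in> Fset pl n Aset u d T"
  unfolding Fset_def by (intro hull_inc imageI)

lemma const_seq:
  assumes q: "q \<in> profiles n Aset" and nT: "1 \<le> n" "1 \<le> T" and d: "0 < (d::real)"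
  shows "(\<lambda>s. if s \<in> {1..n*T} then q else undefined) \<in> seqs n (n*T) Aset"
    "Uval n T d u i (\<lambda>s. if s \<in> {1..n*T} then q else undefined) = u i q"
proof -
  show "(\<lambda>s. if s \<in> {1..n*T} then q else undefined) \<in> seqs n (n*T) Aset"
    unfolding seqs_def using q by auto
  have "0 < (\<Sum>k=1..n*T. d ^ (k - 1))" using S_pos[OF d m_pos[OF nT]] .
  moreover have "(\<Sum>k=1..n*T. d ^ (k - 1) * u i ((\<lambda>s. if s \<in> {1..n*T} then q else undefined) (cyc (n*T) ((i - 1) * T + k))))
      = (\<Sum>k=1..n*T. d ^ (k - 1)) * u i q"
    using cyc_range[of "n*T"] m_pos[OF nT] by (simp add: sum_distrib_right)
  ultimately show "Uval n T d u i (\<lambda>s. if s \<in> {1..n*T} then q else undefined) = u i q"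
    unfolding Uval_def by simp
qed

lemma F_props:
  assumes fin: "\<forall>i\<in>{1..n}. finite (Aset i) \<and> Aset i \<noteq> {}"
  shows "Fset pl n Aset u d T \<noteq> {}" "bounded (Fset pl n Aset u d T)" "convex (Fset pl n Aset u d T)"
  unfolding Fset_def using seqs_fin[OF fin, of "n*T"]
  by (auto intro!: finite_imp_bounded_convex_hull simp: convex_hull_eq_empty)

lemma V_props:
  assumes fin: "\<forall>i\<in>{1..n}. finite (Aset i) \<and> Aset i \<noteq> {}"
  shows "Vset pl n Aset u \<noteq> {}" "bounded (Vset pl n Aset u)" "convex (Vset pl n Aset u)"
  unfolding Vset_def using profiles_fin[OF fin]
  by (auto intro!: finite_imp_bounded_convex_hull simp: convex_hull_eq_empty)

lemma U_avg:
  assumes fin: "\<forall>i\<in>{1..n}. finite (Aset i) \<and> Aset i \<noteq> {}"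
    and a: "a \<in> seqs n (n*T) Aset" and nT: "1 \<le> n" "1 \<le> T" and d: "0 < (d::real)" "d \<le> 1"
  shows "\<bar>Uval n T d u i a - (\<Sum>s=1..n*T. u i (a s)) / (n*T)\<bar>
      \<le> Rng n Aset u i * ((1 - d ^ (n*T)) / d ^ (n*T))"
proof -
  define m where "m = n * T"
  have m1: "1 \<le> m" unfolding m_def using m_pos[OF nT] .
  define w where "w k = d ^ (k - 1)" for k :: nat
  define x where "x k = u i (a (cyc m ((i - 1) * T + k)))" for k
  define S where "S = (\<Sum>k=1..m. w k)"
  define Dm where "Dm = d ^ m"
  define c0 where "c0 = Min (u i ` profiles n Aset)"
  define R where "R = Rng n Aset u i"
  have Dm0: "0 < Dm" unfolding Dm_def using d by simp
  have S0: "0 < S" unfolding S_def w_def using S_pos[OF d(1) m1] .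
  have wb: "Dm \<le> w k \<and> w k \<le> 1" if "k \<in> {1..m}" for k
    unfolding w_def Dm_def using that d by (auto intro: power_decreasing power_le_one)
  have Sb: "m * Dm \<le> S" "S \<le> m * 1"
    unfolding S_def using sum_bounded_below[of "{1..m}" Dm w] sum_bounded_above[of "{1..m}" w 1] wb by auto
  have xP: "a (cyc m ((i - 1) * T + k)) \<in> profiles n Aset" for k
    using seqs_mem[OF a[folded m_def] cyc_range] m1 by auto
  have xb: "\<bar>x k - c0\<bar> \<le> R" for k
  proof -
    have "c0 \<le> x k" "x k \<le> Max (u i ` profiles n Aset)"
      using u_bounds[OF fin xP[of k], of u i] unfolding c0_def x_def by auto
    then show ?thesis unfolding R_def Rng_def c0_def by simp
  qed
  have avg: "(\<Sum>s=1..m. u i (a s)) = (\<Sum>k=1..m. x k)"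
    unfolding x_def using sum_cyc_shift[of m "\<lambda>s. u i (a s)" "(i - 1) * T"] m1 by simp
  have U: "Uval n T d u i a = (\<Sum>k=1..m. w k * x k) / S"
    unfolding Uval_def S_def w_def x_def m_def ..
  have key: "(\<Sum>k=1..m. w k * x k) / S - (\<Sum>k=1..m. x k) / m = (\<Sum>k=1..m. (w k / S - 1 / m) * (x k - c0))"
  proof -
    have mm: "real m \<noteq> 0" using m1 by simp
    have "(\<Sum>k=1..m. (w k / S - 1 / m) * (x k - c0)) =
        (\<Sum>k=1..m. w k * x k / S - x k / m - c0 * w k / S + c0 / m)"
      using S0 mm by (intro sum.cong refl) (simp add: field_simps)
    also have "\<dots> = (\<Sum>k=1..m. w k * x k) / S - (\<Sum>k=1..m. x k) / m - c0 * (\<Sum>k=1..m. w k) / S + m * (c0 / m)"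
      by (simp add: sum.distrib sum_subtractf sum_divide_distrib sum_distrib_left)
    also have "c0 * (\<Sum>k=1..m. w k) / S = c0" using S0 unfolding S_def by simp
    also have "m * (c0 / m) = c0" using mm by simp
    finally show ?thesis by simp
  qed
  have tb: "\<bar>w k / S - 1 / m\<bar> \<le> (1 - Dm) / (m * Dm)" if k: "k \<in> {1..m}" for k
  proof -
    have "S / m \<le> 1" "Dm \<le> S / m" using Sb m1 by (auto simp: field_simps)
    then have "\<bar>w k - S / m\<bar> \<le> 1 - Dm" using wb[OF k] by linarith
    moreover have "w k / S - 1 / m = (w k - S / m) / S" using S0 m1 by (simp add: field_simps)
    ultimately have "\<bar>w k / S - 1 / m\<bar> \<le> (1 - Dm) / S" using S0 by (simp add: divide_right_mono)
    also have "\<dots> \<le> (1 - Dm) / (m * Dm)"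
    proof (rule divide_left_mono)
      show "0 \<le> 1 - Dm" using wb[of 1] m1 by auto
      show "real m * Dm \<le> S" using Sb by simp
      have "0 < real m * Dm" using Dm0 m1 by simp
      then show "0 < S * (real m * Dm)" using S0 by simp
    qed
    finally show ?thesis .
  qed
  have "\<bar>\<Sum>k=1..m. (w k / S - 1 / m) * (x k - c0)\<bar> \<le> (\<Sum>k=1..m. \<bar>(w k / S - 1 / m) * (x k - c0)\<bar>)"
    by (rule sum_abs)
  also have "\<dots> \<le> (\<Sum>k=1..m. (1 - Dm) / (m * Dm) * R)"
  proof (rule sum_mono)
    fix k assume k: "k \<in> {1..m}"
    have "0 \<le> (1 - Dm) / (m * Dm)" using wb[OF k] Dm0 by simp
    then show "\<bar>(w k / S - 1 / m) * (x k - c0)\<bar> \<le> (1 - Dm) / (m * Dm) * R"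
      unfolding abs_mult using tb[OF k] xb[of k] by (intro mult_mono) auto
  qed
  also have "\<dots> = R * ((1 - Dm) / Dm)" using m1 by simp
  finally show ?thesis
    unfolding U using key avg unfolding m_def R_def Dm_def by (simp add: of_nat_mult)
qed

lemma tail_sum:
  assumes d: "0 < (d::real)" and T: "T \<le> m"
  shows "(\<Sum>k\<in>{T+1..m}. d ^ (k - 1)) \<le> d ^ T * (\<Sum>k=1..m. d ^ (k - 1))"
proof -
  have "(\<Sum>k\<in>{T+1..m}. d ^ (k - 1)) = (\<Sum>k\<in>{1 + T..(m - T) + T}. d ^ (k - 1))"
    using T by (simp add: add.commute)
  also have "\<dots> = (\<Sum>j=1..m - T. d ^ (j + T - 1))"
    by (rule sum.shift_bounds_cl_nat_ivl)
  also have "\<dots> = (\<Sum>j=1..m - T. d ^ T * d ^ (j - 1))"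
  proof (intro sum.cong refl)
    fix j assume "j \<in> {1..m - T}"
    then have "j + T - 1 = T + (j - 1)" by auto
    then show "d ^ (j + T - 1) = d ^ T * d ^ (j - 1)" by (simp add: power_add)
  qed
  also have "\<dots> = d ^ T * (\<Sum>j=1..m - T. d ^ (j - 1))" by (simp add: sum_distrib_left)
  also have "\<dots> \<le> d ^ T * (\<Sum>j=1..m. d ^ (j - 1))"
    using d by (intro mult_left_mono sum_mono2) auto
  finally show ?thesis .
qed

lemma U_block:
  assumes fin: "\<forall>i\<in>{1..n}. finite (Aset i) \<and> Aset i \<noteq> {}"
    and q: "\<forall>i. q i \<in> profiles n Aset" and nT: "1 \<le> n" "1 \<le> T" and d: "0 < (d::real)" "d \<le> 1"
    and i: "i \<in> {1..n}"
    and a: "a = (\<lambda>s. if s \<in> {1..n*T} then q ((s - 1) div T + 1) else undefined)"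
  shows "\<bar>Uval n T d u i a - u i (q i)\<bar> \<le> d ^ T * Rng n Aset u i"
proof -
  define m where "m = n * T"
  have m1: "1 \<le> m" unfolding m_def using m_pos[OF nT] .
  define w where "w k = d ^ (k - 1)" for k :: nat
  define x where "x k = u i (a (cyc m ((i - 1) * T + k)))" for k
  define S where "S = (\<Sum>k=1..m. w k)"
  define c where "c = u i (q i)"
  define R where "R = Rng n Aset u i"
  have S0: "0 < S" unfolding S_def w_def using S_pos[OF d(1) m1] .
  have U: "Uval n T d u i a = (\<Sum>k=1..m. w k * x k) / S"
    unfolding Uval_def S_def w_def x_def m_def ..
  have aP: "a s \<in> profiles n Aset" if "s \<in> {1..m}" for s
    using that q unfolding a m_def by auto
  have xR: "\<bar>x k - c\<bar> \<le> R" for k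
    unfolding x_def c_def R_def using aP[OF cyc_range] m1 q by (intro u_rng(1)[OF fin]) auto
  have xc: "x k = c" if k: "k \<in> {1..T}" for k
  proof -
    have "(i - 1) * T + T = i * T" using i by (cases i) auto
    also have "\<dots> \<le> n * T" using i by simp
    finally have le: "(i - 1) * T + k \<le> m" unfolding m_def using k by simp
    have c1: "cyc m ((i - 1) * T + k) = (i - 1) * T + k" using le k by (intro cyc_id) auto
    have "((i - 1) * T + k - 1) div T = ((k - 1) + (i - 1) * T) div T" using k by (simp add: add.commute)
    also have "\<dots> = (i - 1) + (k - 1) div T" using nT by simp
    also have "(k - 1) div T = 0" using k by (intro div_less) auto
    finally have "((i - 1) * T + k - 1) div T + 1 = i" using i by simp
    then show ?thesis unfolding x_def c_def c1 a using le k m_def by auto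
  qed
  have "\<bar>Uval n T d u i a - c\<bar> \<le> (\<Sum>k=1..m. w k * \<bar>x k - c\<bar>) / S"
  proof -
    have wnn: "\<forall>k\<in>{1..m}. 0 \<le> w k" unfolding w_def using d by simp
    have S0': "0 < sum w {1..m}" using S0 unfolding S_def .
    show ?thesis unfolding U S_def by (rule avg_close[OF _ wnn S0']) simp
  qed
  also have "(\<Sum>k=1..m. w k * \<bar>x k - c\<bar>) \<le> (\<Sum>k=1..m. if k \<le> T then 0 else w k * R)"
  proof (rule sum_mono)
    fix k assume k: "k \<in> {1..m}"
    show "w k * \<bar>x k - c\<bar> \<le> (if k \<le> T then 0 else w k * R)"
    proof (cases "k \<le> T")
      case True then show ?thesis using xc[of k] k by simp
    next
      case False
      have "0 \<le> w k" unfolding w_def using d by simp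
      then show ?thesis using False xR[of k] by (simp add: mult_left_mono)
    qed
  qed
  also have "(\<Sum>k=1..m. if k \<le> T then 0 else w k * R) = (\<Sum>k\<in>{T+1..m}. w k * R)"
  proof -
    have "(\<Sum>k=1..m. if k \<le> T then 0 else w k * R) = (\<Sum>k\<in>{1..m} \<inter> {k. k \<le> T}. 0) + (\<Sum>k\<in>{1..m} \<inter> - {k. k \<le> T}. w k * R)"
      by (rule sum.If_cases) simp
    also have "{1..m} \<inter> - {k. k \<le> T} = {T+1..m}" using nT by auto
    finally show ?thesis by simp
  qed
  also have "\<dots> = R * (\<Sum>k\<in>{T+1..m}. w k)" by (simp add: sum_distrib_left mult.commute)
  also have "\<dots> \<le> R * (d ^ T * S)"
  proof (rule mult_left_mono)
    have "T \<le> m" unfolding m_def using nT by simp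
    then show "(\<Sum>k\<in>{T+1..m}. w k) \<le> d ^ T * S" unfolding w_def S_def using tail_sum[OF d(1)] by blast
    show "0 \<le> R" unfolding R_def using u_rng(2)[OF fin q[rule_format] q[rule_format]] .
  qed
  finally show ?thesis using S0 unfolding c_def R_def by (simp add: divide_right_mono mult.commute)
qed


lemma avg_in_V:
  assumes a: "a \<in> seqs n m Aset" and m1: "1 \<le> m"
  shows "vec_of pl n (\<lambda>i. (\<Sum>s=1..m. u i (a s)) / m) \<in> Vset pl n Aset u"
proof -
  have eq: "vec_of pl n (\<lambda>i. (\<Sum>s=1..m. u i (a s)) / m) =
      (\<Sum>s\<in>{1..m}. (1 / real m) *\<^sub>R vec_of pl n (\<lambda>i. u i (a s)))"
    by (simp add: vec_eq_iff vec_of_nth sum_divide_distrib)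
  have "(\<Sum>s\<in>{1..m}. (1 / real m) *\<^sub>R vec_of pl n (\<lambda>i. u i (a s))) \<in> Vset pl n Aset u"
  proof (rule convex_sum)
    show "convex (Vset pl n Aset u)" unfolding Vset_def by simp
    show "(\<Sum>i\<in>{1..m}. 1 / real m) = 1" using m1 by simp
    show "\<And>s. s \<in> {1..m} \<Longrightarrow> vec_of pl n (\<lambda>i. u i (a s)) \<in> Vset pl n Aset u"
      unfolding Vset_def using seqs_mem[OF a] by (intro hull_inc) auto
  qed auto
  then show ?thesis using eq by simp
qed

lemma part2:
  fixes u :: "nat \<Rightarrow> (nat \<Rightarrow> 'b) \<Rightarrow> real" and pl :: "nat \<Rightarrow> 'n::finite"
  assumes n2: "n \<ge> 2"
    and fin: "\<forall>i\<in>{1..n}. finite (Aset i) \<and> Aset i \<noteq> {}"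
    and pl: "bij_betw pl {1..n} (UNIV :: 'n set)"
  shows "\<forall>\<epsilon>>0. \<exists>\<eta>>0. \<forall>(\<delta>::real) (T::nat). 0 < \<delta> \<and> \<delta> \<le> 1 \<and> T \<ge> 1 \<and> 1 - \<eta> < \<delta> ^ T \<longrightarrow>
        hausdorff_dist (Fset pl n Aset u \<delta> T) (Vset pl n Aset u) < \<epsilon>"
proof (intro allI impI)
  fix e :: real assume e: "e > 0"
  let ?P = "profiles n Aset"
  define B where "B = (\<Sum>i=1..n. Rng n Aset u i)"
  obtain q0 where q0: "q0 \<in> ?P" using profiles_fin[OF fin] by auto
  have B0: "0 \<le> B" unfolding B_def using u_rng(2)[OF fin q0 q0] by (intro sum_nonneg) auto
  have n1: "1 \<le> n" using n2 by simp
  define eta where "eta = min (1 / (2 * n)) (e / (4 * n * (B + 1)))"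
  have eta0: "eta > 0" unfolding eta_def using e B0 n1 by simp
  show "\<exists>\<eta>>0. \<forall>(\<delta>::real) (T::nat). 0 < \<delta> \<and> \<delta> \<le> 1 \<and> T \<ge> 1 \<and> 1 - \<eta> < \<delta> ^ T \<longrightarrow>
        hausdorff_dist (Fset pl n Aset u \<delta> T) (Vset pl n Aset u) < e"
  proof (intro exI[of _ eta] conjI eta0 allI impI)
    fix d :: real and T :: nat assume h: "0 < d \<and> d \<le> 1 \<and> T \<ge> 1 \<and> 1 - eta < d ^ T"
    then have d: "0 < d" "d \<le> 1" and T1: "1 \<le> T" and dT: "1 - eta < d ^ T" by auto
    define Dm where "Dm = d ^ (n * T)"
    have Dm_eq: "Dm = (d ^ T) ^ n" unfolding Dm_def by (simp add: power_mult mult.commute)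
    have "1 + real n * (d ^ T - 1) \<le> (1 + (d ^ T - 1)) ^ n"
      using d by (intro Bernoulli_inequality) simp
    then have bern: "1 - n * (1 - d ^ T) \<le> Dm" unfolding Dm_eq by (simp add: algebra_simps)
    have "n * (1 - d ^ T) \<le> n * eta" using dT by (intro mult_left_mono) auto
    then have c1: "1 - Dm \<le> n * eta" using bern by linarith
    have "n * eta \<le> n * (1 / (2 * n))" unfolding eta_def by (intro mult_left_mono) auto
    then have "n * eta \<le> 1 / 2" using n1 by simp
    then have Dmh: "1 / 2 \<le> Dm" using c1 by linarith
    have Dm1: "Dm \<le> 1" unfolding Dm_def using d by (simp add: power_le_one)
    define r where "r = B * ((1 - Dm) / Dm)"
    have r0: "0 \<le> r" unfolding r_def using B0 Dm1 Dmh by simp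
    have "(1 - Dm) / Dm \<le> 2 * (1 - Dm)"
    proof -
      have Dm0: "0 < Dm" using Dmh by simp
      have "0 \<le> (1 - Dm) * (2 * Dm - 1)" using Dmh Dm1 by (intro mult_nonneg_nonneg) auto
      then have "1 - Dm \<le> 2 * (1 - Dm) * Dm" by (simp add: algebra_simps)
      then show ?thesis using Dm0 by (simp add: pos_divide_le_eq)
    qed
    also have "\<dots> \<le> 2 * (n * eta)" using c1 by simp
    also have "\<dots> \<le> 2 * (n * (e / (4 * n * (B + 1))))" unfolding eta_def
      by (intro mult_left_mono) auto
    also have "\<dots> = e / (2 * (B + 1))"
    proof -
      obtain y where y: "y = B + 1" "y > 0" using B0 by auto
      have nn: "real n > 0" using n1 by auto
      have "2 * (real n * (e / (4 * real n * y))) = e / (2 * y)"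
        using nn y(2) by (simp add: field_simps)
      then show ?thesis using y(1) by simp
    qed
    finally have "r \<le> B * (e / (2 * (B + 1)))" unfolding r_def using B0 by (intro mult_left_mono)
    also have "\<dots> < e"
    proof -
      have "B * (e / (2 * (B + 1))) = e * (B / (2 * (B + 1)))" by simp
      also have "\<dots> < e * 1" using e B0 by (intro mult_strict_left_mono) (auto simp: divide_less_eq)
      finally show ?thesis by simp
    qed
    finally have re: "r < e" .
    show "hausdorff_dist (Fset pl n Aset u d T) (Vset pl n Aset u) < e"
    proof (rule hd_lemma)
      show "Fset pl n Aset u d T \<noteq> {}" "bounded (Fset pl n Aset u d T)" using F_props[OF fin] by auto
      show "Vset pl n Aset u \<noteq> {}" "bounded (Vset pl n Aset u)" using V_props[OF fin] by auto
      show "r < e" by (rule re)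
    next
      have "\<forall>x\<in>convex hull ((\<lambda>a. vec_of pl n (\<lambda>i. Uval n T d u i a)) ` seqs n (n*T) Aset).
          \<exists>t\<in>Vset pl n Aset u. dist x t \<le> r"
      proof (rule hull_close[OF V_props(3)[OF fin] r0], intro ballI)
        fix g assume "g \<in> (\<lambda>a. vec_of pl n (\<lambda>i. Uval n T d u i a)) ` seqs n (n*T) Aset"
        then obtain a where a: "a \<in> seqs n (n*T) Aset" and g: "g = vec_of pl n (\<lambda>i. Uval n T d u i a)" by auto
        let ?z = "vec_of pl n (\<lambda>i. (\<Sum>s=1..n*T. u i (a s)) / (n*T))"
        have "?z \<in> Vset pl n Aset u" using avg_in_V[OF a m_pos[OF n1 T1]] by (simp add: of_nat_mult)
        moreover have "dist g ?z \<le> r"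
        proof -
          have "dist g ?z \<le> (\<Sum>i=1..n. \<bar>Uval n T d u i a - (\<Sum>s=1..n*T. u i (a s)) / (n*T)\<bar>)"
            unfolding g dist_norm by (rule vec_of_norm[OF pl])
          also have "\<dots> \<le> (\<Sum>i=1..n. Rng n Aset u i * ((1 - Dm) / Dm))"
            unfolding Dm_def using U_avg[OF fin a n1 T1 d] by (intro sum_mono) auto
          also have "\<dots> = r" unfolding r_def B_def by (simp add: sum_distrib_right sum_divide_distrib)
          finally show ?thesis .
        qed
        ultimately show "\<exists>t\<in>Vset pl n Aset u. dist g t \<le> r" by blast
      qed
      then show "\<forall>x\<in>Fset pl n Aset u d T. \<exists>y\<in>Vset pl n Aset u. dist x y \<le> r"
        unfolding Fset_def .
    next
      have "\<forall>x\<in>convex hull ((\<lambda>a. vec_of pl n (\<lambda>i. u i a)) ` ?P).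
          \<exists>t\<in>Fset pl n Aset u d T. dist x t \<le> r"
      proof (rule hull_close[OF F_props(3)[OF fin] r0], intro ballI)
        fix g assume "g \<in> (\<lambda>a. vec_of pl n (\<lambda>i. u i a)) ` ?P"
        then obtain q where q: "q \<in> ?P" and g: "g = vec_of pl n (\<lambda>i. u i q)" by auto
        have "g = vec_of pl n (\<lambda>i. Uval n T d u i (\<lambda>s. if s \<in> {1..n*T} then q else undefined))"
          unfolding g using const_seq(2)[OF q n1 T1 d(1)] by simp
        then have "g \<in> Fset pl n Aset u d T" using U_in_F[OF const_seq(1)[OF q n1 T1 d(1)]] by simp
        then show "\<exists>t\<in>Fset pl n Aset u d T. dist g t \<le> r" using r0 by (intro bexI[of _ g]) auto
      qed
      then show "\<forall>y\<in>Vset pl n Aset u. \<exists>x\<in>Fset pl n Aset u d T. dist y x \<le> r"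
        unfolding Vset_def .
    qed
  qed
qed

lemma part4:
  fixes u :: "nat \<Rightarrow> (nat \<Rightarrow> 'b) \<Rightarrow> real" and pl :: "nat \<Rightarrow> 'n::finite"
  assumes n2: "n \<ge> 2"
    and fin: "\<forall>i\<in>{1..n}. finite (Aset i) \<and> Aset i \<noteq> {}"
    and pl: "bij_betw pl {1..n} (UNIV :: 'n set)"
  shows "\<forall>\<epsilon>>0. \<exists>\<eta>>0. \<forall>(\<delta>::real) (T::nat). 0 < \<delta> \<and> \<delta> \<le> 1 \<and> T \<ge> 1 \<and> \<delta> ^ T < \<eta> \<longrightarrow>
        hausdorff_dist (Fset pl n Aset u \<delta> T) (Boxset pl n Aset u) < \<epsilon>"
proof (intro allI impI)
  fix e :: real assume e: "e > 0"
  let ?P = "profiles n Aset"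
  define B where "B = (\<Sum>i=1..n. Rng n Aset u i)"
  obtain q0 where q0: "q0 \<in> ?P" using profiles_fin[OF fin] by auto
  have B0: "0 \<le> B" unfolding B_def using u_rng(2)[OF fin q0 q0] by (intro sum_nonneg) auto
  have n1: "1 \<le> n" using n2 by simp
  define lo where "lo i = Min (u i ` ?P)" for i
  define hi where "hi i = Max (u i ` ?P)" for i
  define L where "L = vec_of pl n lo"
  define H where "H = vec_of pl n hi"
  have Box: "Boxset pl n Aset u = cbox L H" unfolding Boxset_def L_def H_def lo_def hi_def ..
  have lohi: "lo i \<le> hi i" for i
    using u_bounds[OF fin q0, of u i] unfolding lo_def hi_def by auto
  have LH: "\<forall>j. L$j \<le> H$j" unfolding L_def H_def vec_of_nth using lohi by auto
  have "\<forall>i. \<exists>p. p \<in> ?P \<and> u i p = lo i"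
  proof
    fix i
    have "lo i \<in> u i ` ?P" unfolding lo_def using profiles_fin[OF fin] by (intro Min_in) auto
    then show "\<exists>p. p \<in> ?P \<and> u i p = lo i" by auto
  qed
  then obtain pmin where pmin: "\<forall>i. pmin i \<in> ?P \<and> u i (pmin i) = lo i" by metis
  have "\<forall>i. \<exists>p. p \<in> ?P \<and> u i p = hi i"
  proof
    fix i
    have "hi i \<in> u i ` ?P" unfolding hi_def using profiles_fin[OF fin] by (intro Max_in) auto
    then show "\<exists>p. p \<in> ?P \<and> u i p = hi i" by auto
  qed
  then obtain pmax where pmax: "\<forall>i. pmax i \<in> ?P \<and> u i (pmax i) = hi i" by metis
  define eta where "eta = e / (2 * (B + 1))"
  have eta0: "eta > 0" unfolding eta_def using e B0 by simp
  show "\<exists>\<eta>>0. \<forall>(\<delta>::real) (T::nat). 0 < \<delta> \<and> \<delta> \<le> 1 \<and> T \<ge> 1 \<and> \<delta> ^ T < \<eta> \<longrightarrow>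
        hausdorff_dist (Fset pl n Aset u \<delta> T) (Boxset pl n Aset u) < e"
  proof (intro exI[of _ eta] conjI eta0 allI impI)
    fix d :: real and T :: nat assume h: "0 < d \<and> d \<le> 1 \<and> T \<ge> 1 \<and> d ^ T < eta"
    then have d: "0 < d" "d \<le> 1" and T1: "1 \<le> T" and dT: "d ^ T < eta" by auto
    define r where "r = d ^ T * B"
    have r0: "0 \<le> r" unfolding r_def using B0 d by simp
    have "r \<le> eta * B" unfolding r_def using dT B0 by (intro mult_right_mono) auto
    also have "\<dots> < e"
    proof -
      have "eta * B = e * (B / (2 * (B + 1)))" unfolding eta_def by simp
      also have "\<dots> < e * 1" using e B0 by (intro mult_strict_left_mono) (auto simp: divide_less_eq)
      finally show ?thesis by simp
    qed
    finally have re: "r < e" .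
    have FB: "Fset pl n Aset u d T \<subseteq> cbox L H"
      unfolding Fset_def
    proof (rule hull_minimal)
      show "convex (cbox L H)" by simp
      show "(\<lambda>a. vec_of pl n (\<lambda>i. Uval n T d u i a)) ` seqs n (n * T) Aset \<subseteq> cbox L H"
      proof
        fix g assume "g \<in> (\<lambda>a. vec_of pl n (\<lambda>i. Uval n T d u i a)) ` seqs n (n * T) Aset"
        then obtain a where a: "a \<in> seqs n (n*T) Aset" and g: "g = vec_of pl n (\<lambda>i. Uval n T d u i a)" by auto
        show "g \<in> cbox L H" unfolding mem_box_cart g L_def H_def vec_of_nth lo_def hi_def
          using U_bounds[OF fin a n1 T1 d(1)] by auto
      qed
    qed
    show "hausdorff_dist (Fset pl n Aset u d T) (Boxset pl n Aset u) < e"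
      unfolding Box
    proof (rule hd_lemma)
      show "Fset pl n Aset u d T \<noteq> {}" "bounded (Fset pl n Aset u d T)" using F_props[OF fin] by auto
      have "L \<in> cbox L H" using LH by (simp add: mem_box_cart)
      then show "cbox L H \<noteq> {}" by auto
      show "bounded (cbox L H)" by simp
      show "r < e" by (rule re)
      show "\<forall>x\<in>Fset pl n Aset u d T. \<exists>y\<in>cbox L H. dist x y \<le> r"
        using FB r0 by force
    next
      let ?C = "{x. \<forall>j. x$j = L$j \<or> x$j = H$j}"
      have "\<forall>x\<in>convex hull ?C. \<exists>t\<in>Fset pl n Aset u d T. dist x t \<le> r"
      proof (rule hull_close[OF F_props(3)[OF fin] r0], intro ballI)
        fix x assume "x \<in> ?C"
        then have xc: "\<forall>j. x$j = L$j \<or> x$j = H$j" by simp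
        define q where "q i = (if x $ pl i = H $ pl i then pmax i else pmin i)" for i
        have qP: "\<forall>i. q i \<in> ?P" unfolding q_def using pmin pmax by auto
        define a where "a = (\<lambda>s. if s \<in> {1..n*T} then q ((s - 1) div T + 1) else undefined)"
        have a_in: "a \<in> seqs n (n*T) Aset" unfolding a_def seqs_def using qP by auto
        have xq: "x $ pl i = u i (q i)" if i: "i \<in> {1..n}" for i
        proof -
          have Hi: "H $ pl i = hi i" "L $ pl i = lo i"
            unfolding H_def L_def vec_of_nth using inv_pl(3)[OF pl i] by auto
          show ?thesis using xc[rule_format, of "pl i"] pmin pmax Hi unfolding q_def by auto
        qed
        have xv: "x = vec_of pl n (\<lambda>i. x $ pl i)"
          unfolding vec_eq_iff vec_of_nth using inv_pl(2)[OF pl] by metis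
        have "dist x (vec_of pl n (\<lambda>i. Uval n T d u i a)) \<le> (\<Sum>i=1..n. \<bar>x $ pl i - Uval n T d u i a\<bar>)"
          unfolding dist_norm by (subst xv) (rule vec_of_norm[OF pl])
        also have "\<dots> \<le> (\<Sum>i=1..n. d ^ T * Rng n Aset u i)"
        proof (rule sum_mono)
          fix i assume i: "i \<in> {1..n}"
          have "\<bar>Uval n T d u i a - u i (q i)\<bar> \<le> d ^ T * Rng n Aset u i"
            by (rule U_block[OF fin qP n1 T1 d i a_def])
          then show "\<bar>x $ pl i - Uval n T d u i a\<bar> \<le> d ^ T * Rng n Aset u i"
            using xq[OF i] by (simp add: abs_minus_commute)
        qed
        also have "\<dots> = r" unfolding r_def B_def by (simp add: sum_distrib_left)
        finally show "\<exists>t\<in>Fset pl n Aset u d T. dist x t \<le> r"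
          using U_in_F[OF a_in] by blast
      qed
      then show "\<forall>y\<in>cbox L H. \<exists>x\<in>Fset pl n Aset u d T. dist y x \<le> r"
        using box_hull[OF LH] by blast
    qed
  qed
qed

theorem corollary1:
  fixes n :: nat and Aset :: "nat \<Rightarrow> 'b set" and u :: "nat \<Rightarrow> (nat \<Rightarrow> 'b) \<Rightarrow> real"
    and lam :: "nat \<Rightarrow> real" and pl :: "nat \<Rightarrow> 'n::finite"
  assumes n2: "n \<ge> 2"
    and fin: "\<forall>i\<in>{1..n}. finite (Aset i) \<and> Aset i \<noteq> {}"
    and lam_nz: "\<exists>i\<in>{1..n}. lam i \<noteq> 0"
    and pl: "bij_betw pl {1..n} (UNIV :: 'n set)"
  shows
    "(\<exists>\<epsilon>>0. \<forall>(\<delta>::real) (T::nat). 0 < \<delta> \<and> \<delta> \<le> 1 \<and> T \<ge> 1 \<and> 1 - \<epsilon> < \<delta> ^ T \<longrightarrow>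
        solution_is n Aset u lam (\<delta> ^ T)
          (\<lambda>k. argmax_on (profiles n Aset) (\<lambda>a'. \<Sum>i=1..n. lam i * u i a')))
   \<and> (\<forall>\<epsilon>>0. \<exists>\<eta>>0. \<forall>(\<delta>::real) (T::nat). 0 < \<delta> \<and> \<delta> \<le> 1 \<and> T \<ge> 1 \<and> 1 - \<eta> < \<delta> ^ T \<longrightarrow>
        hausdorff_dist (Fset pl n Aset u \<delta> T) (Vset pl n Aset u) < \<epsilon>)
   \<and> (\<exists>\<epsilon>>0. \<forall>(\<delta>::real) (T::nat). 0 < \<delta> \<and> \<delta> \<le> 1 \<and> T \<ge> 1 \<and> \<delta> ^ T < \<epsilon> \<longrightarrow>
        solution_is n Aset u lam (\<delta> ^ T)
          (\<lambda>k. argmax_on (profiles n Aset) (\<lambda>a'. lam k * u k a')))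
   \<and> (\<forall>\<epsilon>>0. \<exists>\<eta>>0. \<forall>(\<delta>::real) (T::nat). 0 < \<delta> \<and> \<delta> \<le> 1 \<and> T \<ge> 1 \<and> \<delta> ^ T < \<eta> \<longrightarrow>
        hausdorff_dist (Fset pl n Aset u \<delta> T) (Boxset pl n Aset u) < \<epsilon>)"
  proof -
  have A: "\<exists>\<epsilon>>0. \<forall>(\<delta>::real) (T::nat). 0 < \<delta> \<and> \<delta> \<le> 1 \<and> T \<ge> 1 \<and> 1 - \<epsilon> < \<delta> ^ T \<longrightarrow>
        solution_is n Aset u lam (\<delta> ^ T)
          (\<lambda>k. argmax_on (profiles n Aset) (\<lambda>a'. \<Sum>i=1..n. lam i * u i a'))"
  proof -
    obtain e where e: "e > 0" and H: "\<forall>(D::real). 0 < D \<and> D \<le> 1 \<and> 1 - e < D \<longrightarrow>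
        solution_is n Aset u lam D (\<lambda>k. argmax_on (profiles n Aset) (\<lambda>a'. \<Sum>i=1..n. lam i * u i a'))"
      using part1[OF n2 fin, of u lam] by blast
    show ?thesis
    proof (intro exI[of _ e] conjI e allI impI)
      fix d :: real and T :: nat assume h: "0 < d \<and> d \<le> 1 \<and> T \<ge> 1 \<and> 1 - e < d ^ T"
      then have "0 < d ^ T" "d ^ T \<le> 1" by (auto simp: power_le_one)
      then show "solution_is n Aset u lam (d ^ T) (\<lambda>k. argmax_on (profiles n Aset) (\<lambda>a'. \<Sum>i=1..n. lam i * u i a'))"
        using H h by blast
    qed
  qed
  have C: "\<exists>\<epsilon>>0. \<forall>(\<delta>::real) (T::nat). 0 < \<delta> \<and> \<delta> \<le> 1 \<and> T \<ge> 1 \<and> \<delta> ^ T < \<epsilon> \<longrightarrow>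
        solution_is n Aset u lam (\<delta> ^ T)
          (\<lambda>k. argmax_on (profiles n Aset) (\<lambda>a'. lam k * u k a'))"
  proof -
    obtain e where e: "e > 0" and H: "\<forall>(D::real). 0 < D \<and> D \<le> 1 \<and> D < e \<longrightarrow>
        solution_is n Aset u lam D (\<lambda>k. argmax_on (profiles n Aset) (\<lambda>a'. lam k * u k a'))"
      using part3[OF n2 fin, of u lam] by blast
    show ?thesis
    proof (intro exI[of _ e] conjI e allI impI)
      fix d :: real and T :: nat assume h: "0 < d \<and> d \<le> 1 \<and> T \<ge> 1 \<and> d ^ T < e"
      then have "0 < d ^ T" "d ^ T \<le> 1" by (auto simp: power_le_one)
      then show "solution_is n Aset u lam (d ^ T) (\<lambda>k. argmax_on (profiles n Aset) (\<lambda>a'. lam k * u k a'))"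
        using H h by blast
    qed
  qed
  show ?thesis using A C part2[OF n2 fin pl, of u] part4[OF n2 fin pl, of u] by blast
qed

end
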